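(* Let $G=(V,E)$ be a graph with a linear order $<$ on $E$, let $\bar{x}=(x_1,\dots,x_{|V|})$, and define $$U'(G,\bar{x},y)=\sum_{A\subseteq E}\prod_{i=1}^{|V|}x_i^{k_i((V,A))}\,y^{|A|}.$$ Then $$U'(G,\bar{x},y)=\sum_{F=(V,A_f)\in\mathcal{F}(G)}\ \sum_{A_i\subseteq E_i(F,G,<)}\ \prod_{j=1}^{|V|}x_j^{k_j((V,A_f\setminus A_i))}\,y^{|A_f\setminus A_i|}\,(1+y)^{e(F,G,<)}.$$
   Context: A graph $G=(V,E)$ consists of a finite nonempty vertex set $V$ and a finite set $E$ of edges. Each edge has as its set of endpoints a 1- or 2-element subset of $V$, so loops and parallel edges are allowed. $(V,A)$ is the spanning subgraph with edge set $A\subseteq E$. $k(H)$ is the number of connected components of $H$, and $k_i(H)$ is the number of connected components of $H$ having exactly $i$ vertices. $F_{-e+f}$ denotes $F$ with edge $e$ deleted and edge $f$ added. A spanning forest of $G$ is a spanning subgraph $F=(V,A)$ which is a forest (no cycles, no loops) with $k(F)=k(G)$; $\mathcal{F}(G)$ is the set of spanning forests. For a linear order $<$ on $E$ and $F=(V,A_f)\in\mathcal{F}(G)$: $e\in A_f$ is internally active if there is no $f\in E\setminus A_f$ with $e<f$ and $F_{-e+f}\in\mathcal{F}(G)$; the set of these is $E_i(F,G,<)$. $f\in E\setminus A_f$ is externally active if there is no $e\in A_f$ with $f<e$ and $F_{-e+f}\in\mathcal{F}(G)$; $e(F,G,<)$ is the number of externally active edges. *)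

theory Defs
  imports Main
begin

text \<open>A graph is given by a vertex set V, an edge set E and an endpoint map
  ends :: 'e => 'v set (each edge has a 1- or 2-element set of endpoints;
  loops and parallel edges are allowed).\<close>

definition is_graph :: "'v set \<Rightarrow> 'e set \<Rightarrow> ('e \<Rightarrow> 'v set) \<Rightarrow> bool" where
  "is_graph V E ends \<longleftrightarrow> finite V \<and> V \<noteq> {} \<and> finite E \<and>
     (\<forall>e\<in>E. ends e \<subseteq> V \<and> (card (ends e) = 1 \<or> card (ends e) = 2))"

definition conn :: "('e \<Rightarrow> 'v set) \<Rightarrow> 'e set \<Rightarrow> ('v \<times> 'v) set" where
  "conn ends A = (\<Union>e\<in>A. {(u,v). u \<in> ends e \<and> v \<in> ends e})\<^sup>*"

definition comps :: "'v set \<Rightarrow> ('e \<Rightarrow> 'v set) \<Rightarrow> 'e set \<Rightarrow> 'v set set" where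
  "comps V ends A = V // conn ends A"

definition ncomp :: "'v set \<Rightarrow> ('e \<Rightarrow> 'v set) \<Rightarrow> 'e set \<Rightarrow> nat" where
  "ncomp V ends A = card (comps V ends A)"

definition ncomp_size :: "'v set \<Rightarrow> ('e \<Rightarrow> 'v set) \<Rightarrow> 'e set \<Rightarrow> nat \<Rightarrow> nat" where
  "ncomp_size V ends A i = card {C \<in> comps V ends A. card C = i}"

text \<open>Length 1 cycles are
  loops, length 2 cycles are pairs of parallel edges.\<close>
definition has_cycle :: "('e \<Rightarrow> 'v set) \<Rightarrow> 'e set \<Rightarrow> bool" where
  "has_cycle ends A \<longleftrightarrow> (\<exists>es vs. es \<noteq> [] \<and> length vs = length es \<and> distinct es \<and>
      distinct vs \<and> set es \<subseteq> A \<and>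
      (\<forall>i<length es. ends (es ! i) = {vs ! i, vs ! ((i + 1) mod length es)}))"

definition spanning_forest :: "'v set \<Rightarrow> 'e set \<Rightarrow> ('e \<Rightarrow> 'v set) \<Rightarrow> 'e set \<Rightarrow> bool" where
  "spanning_forest V E ends A \<longleftrightarrow> A \<subseteq> E \<and> \<not> has_cycle ends A \<and>
     ncomp V ends A = ncomp V ends E"

definition swap_edge :: "'e set \<Rightarrow> 'e \<Rightarrow> 'e \<Rightarrow> 'e set" where
  "swap_edge A e f = insert f (A - {e})"

definition int_active :: "'v set \<Rightarrow> 'e set \<Rightarrow> ('e \<Rightarrow> 'v set) \<Rightarrow> 'e rel \<Rightarrow> 'e set \<Rightarrow> 'e set" where
  "int_active V E ends lt A = {e \<in> A. \<not> (\<exists>f \<in> E - A. (e, f) \<in> lt \<and>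
       spanning_forest V E ends (swap_edge A e f))}"

definition ext_active :: "'v set \<Rightarrow> 'e set \<Rightarrow> ('e \<Rightarrow> 'v set) \<Rightarrow> 'e rel \<Rightarrow> 'e set \<Rightarrow> 'e set" where
  "ext_active V E ends lt A = {f \<in> E - A. \<not> (\<exists>e \<in> A. (f, e) \<in> lt \<and>
       spanning_forest V E ends (swap_edge A e f))}"

definition n_ext_active :: "'v set \<Rightarrow> 'e set \<Rightarrow> ('e \<Rightarrow> 'v set) \<Rightarrow> 'e rel \<Rightarrow> 'e set \<Rightarrow> nat" where
  "n_ext_active V E ends lt A = card (ext_active V E ends lt A)"

definition U' :: "'v set \<Rightarrow> 'e set \<Rightarrow> ('e \<Rightarrow> 'v set) \<Rightarrow> (nat \<Rightarrow> 'a::comm_ring_1) \<Rightarrow> 'a \<Rightarrow> 'a" where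
  "U' V E ends x y = (\<Sum>A\<in>Pow E. (\<Prod>i=1..card V. x i ^ ncomp_size V ends A i) * y ^ card A)"

end

theory Submission
  imports Defs "HOL-Library.Transitive_Closure_Table"
begin


definition erel :: "('e \<Rightarrow> 'v set) \<Rightarrow> 'e set \<Rightarrow> ('v \<times> 'v) set" where
  "erel ends A = (\<Union>e\<in>A. {(u,v). u \<in> ends e \<and> v \<in> ends e})"

lemma conn_erel: "conn ends A = (erel ends A)\<^sup>*"
  by (simp add: conn_def erel_def)

definition link :: "('e \<Rightarrow> 'v set) \<Rightarrow> 'e set \<Rightarrow> 'e \<Rightarrow> bool" where
  "link ends B e \<longleftrightarrow> (\<forall>u\<in>ends e. \<forall>v\<in>ends e. (u,v) \<in> conn ends B)"

lemma conn_refl[simp]: "(u,u) \<in> conn ends A"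
  by (simp add: conn_def)

lemma conn_mono: "A \<subseteq> B \<Longrightarrow> conn ends A \<subseteq> conn ends B"
  unfolding conn_def by (rule rtrancl_mono) blast

lemma conn_monoD: "(u,v) \<in> conn ends A \<Longrightarrow> A \<subseteq> B \<Longrightarrow> (u,v) \<in> conn ends B"
  using conn_mono by blast

lemma conn_trans: "(u,v) \<in> conn ends A \<Longrightarrow> (v,w) \<in> conn ends A \<Longrightarrow> (u,w) \<in> conn ends A"
  unfolding conn_def by (rule rtrancl_trans)

lemma erel_sym: "sym (erel ends A)"
  unfolding erel_def sym_def by blast

lemma conn_sym: "(u,v) \<in> conn ends A \<Longrightarrow> (v,u) \<in> conn ends A"
proof -
  assume a: "(u,v) \<in> conn ends A"
  have "sym ((erel ends A)\<^sup>*)" by (rule sym_rtrancl[OF erel_sym])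
  then show ?thesis using a by (simp add: conn_erel symD)
qed

lemma conn_edge: "e \<in> A \<Longrightarrow> u \<in> ends e \<Longrightarrow> v \<in> ends e \<Longrightarrow> (u,v) \<in> conn ends A"
proof -
  assume "e \<in> A" "u \<in> ends e" "v \<in> ends e"
  then have "(u,v) \<in> erel ends A" unfolding erel_def by blast
  then show ?thesis unfolding conn_erel by (rule r_into_rtrancl)
qed

lemma link_edge: "e \<in> A \<Longrightarrow> link ends A e"
  unfolding link_def by (metis conn_edge)

lemma link_mono: "link ends A e \<Longrightarrow> A \<subseteq> B \<Longrightarrow> link ends B e"
  unfolding link_def using conn_mono[of A B ends] by blast

lemma conn_subset_link:
  assumes "\<And>e. e \<in> A \<Longrightarrow> link ends B e"
  shows "conn ends A \<subseteq> conn ends B"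
proof -
  have "erel ends A \<subseteq> conn ends B"
    using assms unfolding erel_def link_def by blast
  hence "(erel ends A)\<^sup>* \<subseteq> (conn ends B)\<^sup>*" by (rule rtrancl_mono)
  thus ?thesis by (simp add: conn_erel)
qed

lemma conn_insert:
  assumes "(u,w) \<in> conn ends (insert f B)"
  shows "(u,w) \<in> conn ends B \<or> (\<exists>p\<in>ends f. \<exists>q\<in>ends f. (u,p) \<in> conn ends B \<and> (q,w) \<in> conn ends B)"
  using assms unfolding conn_erel
proof (induction rule: rtrancl_induct)
  case base
  then show ?case by simp
next
  case (step z w)
  from step(2) consider "\<exists>d\<in>B. z \<in> ends d \<and> w \<in> ends d" | "z \<in> ends f \<and> w \<in> ends f"
    unfolding erel_def by blast
  then show ?case
  proof cases
    case 1
    then have zw: "(z,w) \<in> (erel ends B)\<^sup>*" unfolding erel_def by blast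
    from step(3) show ?thesis
    proof
      assume "(u,z) \<in> (erel ends B)\<^sup>*"
      then have "(u,w) \<in> (erel ends B)\<^sup>*" using zw by (rule rtrancl_trans)
      then show ?thesis by blast
    next
      assume "\<exists>p\<in>ends f. \<exists>q\<in>ends f. (u, p) \<in> (erel ends B)\<^sup>* \<and> (q, z) \<in> (erel ends B)\<^sup>*"
      then show ?thesis using zw by (meson rtrancl_trans)
    qed
  next
    case 2
    from step(3) show ?thesis
    proof
      assume "(u,z) \<in> (erel ends B)\<^sup>*" then show ?thesis using 2 by blast
    next
      assume "\<exists>p\<in>ends f. \<exists>q\<in>ends f. (u, p) \<in> (erel ends B)\<^sup>* \<and> (q, z) \<in> (erel ends B)\<^sup>*"
      then show ?thesis using 2 by blast
    qed
  qed
qed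

lemma card2_eq:
  assumes "finite S" "card S \<le> 2" "x \<in> S" "y \<in> S" "x \<noteq> y"
  shows "S = {x,y}"
proof (rule ccontr)
  assume "S \<noteq> {x,y}"
  then obtain z where "z \<in> S" "z \<noteq> x" "z \<noteq> y" using assms by blast
  then have "{x,y,z} \<subseteq> S" using assms by auto
  then have "card {x,y,z} \<le> card S" using assms by (intro card_mono) auto
  moreover have "card {x,y,z} = 3" using \<open>z \<noteq> x\<close> \<open>z \<noteq> y\<close> assms by auto
  ultimately show False using assms by auto
qed

lemma quotient_image: "A // r = (\<lambda>x. r``{x}) ` A"
  unfolding quotient_def by blast

locale gr =
  fixes V :: "'v set" and E :: "'e set" and ends :: "'e \<Rightarrow> 'v set"
  assumes graph: "is_graph V E ends"
begin

lemma finV: "finite V" and finE: "finite E" and endsV: "e \<in> E \<Longrightarrow> ends e \<subseteq> V"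
  and ends12: "e \<in> E \<Longrightarrow> card (ends e) = 1 \<or> card (ends e) = 2"
  using graph unfolding is_graph_def by auto

lemma ends_fin: "e \<in> E \<Longrightarrow> finite (ends e)"
  using ends12 card.infinite by fastforce

lemma ends_le2: "e \<in> E \<Longrightarrow> card (ends e) \<le> 2"
  using ends12 by fastforce

lemma ends_ne: "e \<in> E \<Longrightarrow> ends e \<noteq> {}"
  using ends12 by fastforce

definition indep :: "'e set \<Rightarrow> bool" where
  "indep F \<longleftrightarrow> (\<forall>e\<in>F. \<not> link ends (F - {e}) e)"

definition spans :: "'e set \<Rightarrow> bool" where
  "spans F \<longleftrightarrow> (\<forall>e\<in>E. link ends F e)"

lemma spans_conn: "F \<subseteq> E \<Longrightarrow> spans F \<Longrightarrow> conn ends F = conn ends E"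
  using conn_subset_link[of E ends F] conn_mono[of F E ends] unfolding spans_def by blast

lemma ncomp_spans:
  assumes FE: "F \<subseteq> E"
  shows "ncomp V ends F = ncomp V ends E \<longleftrightarrow> spans F"
proof
  assume "spans F" then show "ncomp V ends F = ncomp V ends E"
    using spans_conn FE by (simp add: ncomp_def comps_def)
next
  assume eq: "ncomp V ends F = ncomp V ends E"
  show "spans F"
  proof (rule ccontr)
    assume "\<not> spans F"
    then obtain e u v where e: "e \<in> E" "u \<in> ends e" "v \<in> ends e" "(u,v) \<notin> conn ends F"
      unfolding spans_def link_def by blast
    have uv: "u \<in> V" "v \<in> V" using e endsV by auto
    define Q where "Q = V // conn ends F"
    define \<phi> where "\<phi> X = conn ends E `` X" for X
    have sub: "conn ends F \<subseteq> conn ends E" using FE conn_mono by blast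
    have phi_cls: "\<phi> (conn ends F `` {w}) = conn ends E `` {w}" for w
    proof
      show "\<phi> (conn ends F `` {w}) \<subseteq> conn ends E `` {w}"
      proof
        fix t assume "t \<in> \<phi> (conn ends F `` {w})"
        then obtain z where z: "(w,z) \<in> conn ends F" "(z,t) \<in> conn ends E" unfolding \<phi>_def by blast
        from z(1) sub have "(w,z) \<in> conn ends E" by blast
        with z(2) have "(w,t) \<in> conn ends E" using conn_trans by metis
        then show "t \<in> conn ends E `` {w}" by simp
      qed
    next
      show "conn ends E `` {w} \<subseteq> \<phi> (conn ends F `` {w})"
        unfolding \<phi>_def using conn_refl[of w ends F] by blast
    qed
    have img: "\<phi> ` Q = V // conn ends E"
      unfolding Q_def quotient_image image_image phi_cls by simp
    have finQ: "finite Q" unfolding Q_def quotient_image using finV by simp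
    have "\<not> inj_on \<phi> Q"
    proof
      assume inj: "inj_on \<phi> Q"
      have "conn ends F `` {u} \<in> Q" "conn ends F `` {v} \<in> Q"
        unfolding Q_def quotient_image using uv by auto
      moreover have "\<phi> (conn ends F `` {u}) = \<phi> (conn ends F `` {v})"
        unfolding phi_cls
      proof -
        have uvE: "(u,v) \<in> conn ends E" "(v,u) \<in> conn ends E"
          using conn_edge[of e E u ends v] conn_edge[of e E v ends u] e by auto
        show "conn ends E `` {u} = conn ends E `` {v}"
        proof (rule set_eqI)
          fix t show "t \<in> conn ends E `` {u} \<longleftrightarrow> t \<in> conn ends E `` {v}"
            using uvE conn_trans[of u v ends E t] conn_trans[of v u ends E t] by auto
        qed
      qed
      ultimately have "conn ends F `` {u} = conn ends F `` {v}" using inj inj_on_def by metis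
      moreover have "v \<in> conn ends F `` {v}" by simp
      ultimately have "v \<in> conn ends F `` {u}" by simp
      then show False using e(4) by simp
    qed
    then have "card (\<phi> ` Q) \<noteq> card Q" using inj_on_iff_eq_card finQ by blast
    then have "card (\<phi> ` Q) < card Q" using card_image_le[OF finQ, of \<phi>] by linarith
    then show False using eq img unfolding ncomp_def comps_def Q_def by simp
  qed
qed

end


context gr
begin

lemma cycle_not_indep:
  assumes FE: "F \<subseteq> E" and cyc: "has_cycle ends F"
  shows "\<not> indep F"
proof -
  obtain es vs where c: "es \<noteq> []" "length vs = length es" "distinct es" "distinct vs" "set es \<subseteq> F"
    "\<And>i. i < length es \<Longrightarrow> ends (es ! i) = {vs ! i, vs ! ((i + 1) mod length es)}"
    using cyc unfolding has_cycle_def by blast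
  define n where "n = length es"
  define e0 where "e0 = es ! 0"
  have n1: "n \<ge> 1" using c(1) unfolding n_def by (cases es) auto
  have e0F: "e0 \<in> F" using c(1,5) unfolding e0_def by (simp add: subset_iff)
  have ends0': "ends e0 = {vs ! 0, vs ! ((0+1) mod n)}" unfolding e0_def n_def
    by (rule c(6)) (use c(1) in simp)
  have ends0: "ends e0 = {vs ! 0, vs ! (1 mod n)}" using ends0' by simp
  have "link ends (F - {e0}) e0"
  proof (cases "n = 1")
    case True
    then have "ends e0 = {vs ! 0}" using ends0 by simp
    then show ?thesis unfolding link_def by simp
  next
    case False
    then have n2: "n \<ge> 2" using n1 by simp
    have claim: "1 \<le> k \<longrightarrow> k \<le> n \<longrightarrow> (vs ! 1, vs ! (k mod n)) \<in> conn ends (F - {e0})" for k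
    proof (induction k)
      case 0 then show ?case by simp
    next
      case (Suc k)
      show ?case
      proof (cases "k = 0")
        case True then show ?thesis using n2 by simp
      next
        case False
        show ?thesis
        proof (intro impI)
          assume "Suc k \<le> n"
          then have kn: "k < n" by simp
          with False Suc.IH have ih: "(vs ! 1, vs ! k) \<in> conn ends (F - {e0})" by simp
          have ek: "es ! k \<in> F - {e0}"
            using c(3,5) kn False unfolding e0_def n_def
            by (metis Diff_iff nth_eq_iff_index_eq c(1) length_greater_0_conv nth_mem singletonD subsetD)
          have "ends (es ! k) = {vs ! k, vs ! (Suc k mod n)}" using c(6)[of k] kn unfolding n_def by simp
          then have "(vs ! k, vs ! (Suc k mod n)) \<in> conn ends (F - {e0})"
            using conn_edge[of "es ! k" "F - {e0}" "vs ! k" ends "vs ! (Suc k mod n)"] ek by simp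
          then show "(vs ! 1, vs ! (Suc k mod n)) \<in> conn ends (F - {e0})"
            using ih conn_trans by metis
        qed
      qed
    qed
    have "(vs ! 1, vs ! 0) \<in> conn ends (F - {e0})" using claim[of n] n2 by simp
    moreover have "1 mod n = 1" using n2 by simp
    ultimately show ?thesis unfolding link_def ends0 using conn_sym by auto
  qed
  then show ?thesis unfolding indep_def using e0F by blast
qed

lemma not_indep_cycle:
  assumes FE: "F \<subseteq> E" and ni: "\<not> indep F"
  shows "has_cycle ends F"
proof -
  obtain e where eF: "e \<in> F" and lk: "link ends (F - {e}) e" using ni unfolding indep_def by blast
  have eE: "e \<in> E" using eF FE by blast
  show ?thesis
  proof (cases "card (ends e) = 1")
    case True
    then obtain w where w: "ends e = {w}" using card_1_singletonE by blast
    show ?thesis unfolding has_cycle_def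
      by (rule exI[of _ "[e]"], rule exI[of _ "[w]"]) (use eF w in auto)
  next
    case False
    then have "card (ends e) = 2" using ends12[OF eE] by simp
    then obtain a b where ab: "ends e = {a,b}" "a \<noteq> b" by (meson card_2_iff)
    have "(b,a) \<in> conn ends (F - {e})" using lk ab unfolding link_def by simp
    then have "(\<lambda>x y. (x,y) \<in> erel ends (F - {e}))\<^sup>*\<^sup>* b a"
      unfolding conn_erel by (simp add: rtranclp_rtrancl_eq)
    then obtain xs0 where "rtrancl_path (\<lambda>x y. (x,y) \<in> erel ends (F - {e})) b xs0 a"
      using rtranclp_eq_rtrancl_path by metis
    then obtain xs where p: "rtrancl_path (\<lambda>x y. (x,y) \<in> erel ends (F - {e})) b xs a"
      and dxs: "distinct (b # xs)" by (rule rtrancl_path_distinct)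
    have xsne: "xs \<noteq> []"
    proof
      assume "xs = []"
      then have "b = a" using p by (auto elim: rtrancl_path.cases)
      then show False using ab by simp
    qed
    have lastxs: "last xs = a" using rtrancl_path_last[OF p xsne] .
    define vs where "vs = b # xs"
    define m where "m = length xs"
    have m1: "m \<ge> 1" using xsne unfolding m_def by (cases xs) auto
    have step: "\<exists>d. d \<in> F - {e} \<and> ends d = {vs ! i, vs ! Suc i}" if i: "i < m" for i
    proof -
      have "(vs ! i, xs ! i) \<in> erel ends (F - {e})"
        using rtrancl_path_nth[OF p, of i] i unfolding vs_def m_def by simp
      then obtain d where d: "d \<in> F - {e}" "vs ! i \<in> ends d" "vs ! Suc i \<in> ends d"
        unfolding erel_def vs_def by auto
      have "vs ! i \<noteq> vs ! Suc i"
        using nth_eq_iff_index_eq[OF dxs, of i "Suc i"] i unfolding vs_def m_def by simp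
      moreover have dE: "d \<in> E" using d FE by blast
      ultimately have "ends d = {vs ! i, vs ! Suc i}"
        using card2_eq[OF ends_fin[OF dE] ends_le2[OF dE] d(2) d(3)] by blast
      then show ?thesis using d by blast
    qed
    define ds where "ds = map (\<lambda>i. SOME d. d \<in> F - {e} \<and> ends d = {vs ! i, vs ! Suc i}) [0..<m]"
    have ds: "ds ! i \<in> F - {e}" "ends (ds ! i) = {vs ! i, vs ! Suc i}" if "i < m" for i
      using someI_ex[OF step[OF that]] that unfolding ds_def by auto
    have lds: "length ds = m" unfolding ds_def by simp
    have dvs: "distinct vs" using dxs unfolding vs_def .
    have lvs: "length vs = Suc m" unfolding vs_def m_def by simp
    have dds: "distinct ds"
    proof (subst distinct_conv_nth, intro allI impI)
      fix i j assume ij: "i < length ds" "j < length ds" "i \<noteq> j"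
      show "ds ! i \<noteq> ds ! j"
      proof
        assume eq: "ds ! i = ds ! j"
        have im: "i < m" "j < m" using ij lds by auto
        have "{vs ! i, vs ! Suc i} = {vs ! j, vs ! Suc j}" using ds(2)[OF im(1)] ds(2)[OF im(2)] eq by simp
        then have h1: "vs ! i = vs ! j \<or> vs ! i = vs ! Suc j" and h2: "vs ! j = vs ! i \<or> vs ! j = vs ! Suc i"
          by blast+
        have "vs ! i \<noteq> vs ! j" using nth_eq_iff_index_eq[OF dvs, of i j] im lvs ij(3) by simp
        then have "vs ! i = vs ! Suc j" using h1 by simp
        then have "i = Suc j" using nth_eq_iff_index_eq[OF dvs, of i "Suc j"] im lvs by simp
        moreover have "vs ! j = vs ! Suc i" using h2 \<open>vs ! i \<noteq> vs ! j\<close> by metis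
        then have "j = Suc i" using nth_eq_iff_index_eq[OF dvs, of j "Suc i"] im lvs by simp
        ultimately show False by simp
      qed
    qed
    define es where "es = ds @ [e]"
    have les: "length es = Suc m" unfolding es_def using lds by simp
    show ?thesis unfolding has_cycle_def
    proof (rule exI[of _ es], rule exI[of _ vs], intro conjI allI impI)
      show "es \<noteq> []" unfolding es_def by simp
      show "length vs = length es" using les lvs by simp
      show "distinct es" unfolding es_def using dds ds(1) lds
        by (auto simp: in_set_conv_nth)
      show "distinct vs" by (rule dvs)
      show "set es \<subseteq> F" unfolding es_def using ds(1) lds eF by (auto simp: in_set_conv_nth)
      fix i assume i: "i < length es"
      show "ends (es ! i) = {vs ! i, vs ! ((i + 1) mod length es)}"
      proof (cases "i < m")
        case True
        then show ?thesis using ds(2)[OF True] les lds unfolding es_def by (simp add: nth_append)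
      next
        case False
        then have im: "i = m" using i les by simp
        have "vs ! m = a" using lastxs xsne unfolding vs_def m_def by (simp add: last_conv_nth)
        moreover have "vs ! 0 = b" unfolding vs_def by simp
        ultimately show ?thesis using im les lds ab unfolding es_def by (auto simp: nth_append)
      qed
    qed
  qed
qed

lemma SF_iff: "spanning_forest V E ends F \<longleftrightarrow> F \<subseteq> E \<and> indep F \<and> spans F"
proof (cases "F \<subseteq> E")
  case True
  have "has_cycle ends F \<longleftrightarrow> \<not> indep F"
    using cycle_not_indep[OF True] not_indep_cycle[OF True] by blast
  then show ?thesis unfolding spanning_forest_def using ncomp_spans[OF True] True by simp
next
  case False
  then show ?thesis unfolding spanning_forest_def by simp
qed

end


lemma link_pair: "ends f = {p,q} \<Longrightarrow> (p,q) \<in> conn ends B \<Longrightarrow> link ends B f"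
  unfolding link_def using conn_sym[of p q ends B] by auto

lemma link_conn: "link ends A f \<Longrightarrow> conn ends A \<subseteq> conn ends B \<Longrightarrow> link ends B f"
  unfolding link_def by blast

context gr
begin

abbreviation SF where "SF F \<equiv> spanning_forest V E ends F"

lemma SF_sub: "SF F \<Longrightarrow> F \<subseteq> E" and SF_indep: "SF F \<Longrightarrow> indep F" and SF_spans: "SF F \<Longrightarrow> spans F"
  using SF_iff by auto

lemma SF_fin: "SF F \<Longrightarrow> finite F"
  using SF_sub finE finite_subset by blast

lemma swap_SF:
  assumes F: "SF F" and eF: "e \<in> F" and fE: "f \<in> E" and fF: "f \<notin> F"
    and sep: "\<not> link ends (F - {e}) f"
  shows "SF (swap_edge F e f)"
proof -
  have FE: "F \<subseteq> E" and ind: "indep F" and sp: "spans F" using F SF_iff by auto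
  have eE: "e \<in> E" using eF FE by blast
  obtain c d where cd: "c \<in> ends f" "d \<in> ends f" "(c,d) \<notin> conn ends (F - {e})"
    using sep unfolding link_def by blast
  have "(c,d) \<in> conn ends F" using sp fE cd unfolding spans_def link_def by blast
  moreover have "F = insert e (F - {e})" using eF by blast
  ultimately have "(c,d) \<in> conn ends (insert e (F - {e}))" by simp
  then obtain p q where pq: "p \<in> ends e" "q \<in> ends e" "(c,p) \<in> conn ends (F - {e})" "(q,d) \<in> conn ends (F - {e})"
    using conn_insert[of c d ends e "F - {e}"] cd(3) by blast
  have "p \<noteq> q" using pq cd(3) conn_trans[of c p ends "F - {e}" d] by auto
  then have ep: "ends e = {p,q}" using card2_eq[OF ends_fin[OF eE] ends_le2[OF eE] pq(1,2)] by simp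
  define F' where "F' = insert f (F - {e})"
  have F'sw: "swap_edge F e f = F'" unfolding swap_edge_def F'_def by simp
  have sub1: "F - {e} \<subseteq> F'" unfolding F'_def by blast
  have "(p,c) \<in> conn ends F'" by (rule conn_monoD[OF conn_sym[OF pq(3)] sub1])
  moreover have "(c,d) \<in> conn ends F'" using conn_edge[of f F' c ends d] cd unfolding F'_def by simp
  moreover have "(d,q) \<in> conn ends F'" by (rule conn_monoD[OF conn_sym[OF pq(4)] sub1])
  ultimately have "(p,q) \<in> conn ends F'" using conn_trans[of p c ends F' d] conn_trans[of p d ends F' q] by blast
  then have le: "link ends F' e" using link_pair[where ends=ends, OF ep] by blast
  have "\<And>g. g \<in> F \<Longrightarrow> link ends F' g"
  proof -
    fix g assume "g \<in> F"
    show "link ends F' g"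
    proof (cases "g = e")
      case True then show ?thesis using le by simp
    next
      case False then show ?thesis using \<open>g \<in> F\<close> link_edge[of g F'] unfolding F'_def by blast
    qed
  qed
  then have cF: "conn ends F \<subseteq> conn ends F'" by (rule conn_subset_link)
  have spans': "spans F'" unfolding spans_def
  proof
    fix h assume "h \<in> E"
    then have "link ends F h" using sp unfolding spans_def by blast
    then show "link ends F' h" using link_conn[OF _ cF] by blast
  qed
  have sub': "F' \<subseteq> E" unfolding F'_def using FE fE by blast
  have ind': "indep F'"
    unfolding indep_def
  proof
    fix g assume gF': "g \<in> F'"
    show "\<not> link ends (F' - {g}) g"
    proof (cases "g = f")
      case True
      then have "F' - {g} = F - {e}" unfolding F'_def using fF by blast
      then show ?thesis using sep True by simp
    next
      case False
      then have gF: "g \<in> F" "g \<noteq> e" using gF' unfolding F'_def by auto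
      obtain u v where uv: "u \<in> ends g" "v \<in> ends g" "(u,v) \<notin> conn ends (F - {g})"
        using ind gF unfolding indep_def link_def by blast
      show ?thesis
      proof
        assume "link ends (F' - {g}) g"
        then have "(u,v) \<in> conn ends (F' - {g})" using uv unfolding link_def by blast
        moreover have "F' - {g} = insert f (F - {e} - {g})" unfolding F'_def using False by blast
        ultimately have uvi: "(u,v) \<in> conn ends (insert f (F - {e} - {g}))" by simp
        have subB: "F - {e} - {g} \<subseteq> F - {g}" by blast
        have subB2: "F - {e} - {g} \<subseteq> F - {e}" by blast
        have nB: "(u,v) \<notin> conn ends (F - {e} - {g})" using uv(3) conn_monoD[OF _ subB, of u v ends] by blast
        then obtain p' q' where pq': "p' \<in> ends f" "q' \<in> ends f"
          "(u,p') \<in> conn ends (F - {e} - {g})" "(q',v) \<in> conn ends (F - {e} - {g})"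
          using conn_insert[OF uvi] by blast
        have "p' \<noteq> q'" using pq' nB conn_trans[of u p' ends "F - {e} - {g}" v] by auto
        then have ef: "ends f = {p',q'}" using card2_eq[OF ends_fin[OF fE] ends_le2[OF fE] pq'(1,2)] by simp
        have "(p',u) \<in> conn ends (F - {e})" by (rule conn_monoD[OF conn_sym[OF pq'(3)] subB2])
        moreover have "(u,v) \<in> conn ends (F - {e})" using conn_edge[of g "F - {e}" u ends v] uv gF by simp
        moreover have "(v,q') \<in> conn ends (F - {e})" by (rule conn_monoD[OF conn_sym[OF pq'(4)] subB2])
        ultimately have "(p',q') \<in> conn ends (F - {e})"
          using conn_trans[of p' u ends "F - {e}" v] conn_trans[of p' v ends "F - {e}" q'] by blast
        then have "link ends (F - {e}) f" using link_pair[where ends=ends, OF ef] by blast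
        then show False using sep by simp
      qed
    qed
  qed
  show ?thesis unfolding F'sw using SF_iff sub' ind' spans' by blast
qed

lemma path_lemma:
  assumes FE: "F \<subseteq> E" and ind: "indep F" and ab: "(a,b) \<in> conn ends F"
  shows "\<exists>P\<subseteq>F. (a,b) \<in> conn ends P \<and> (\<forall>h\<in>P. (a,b) \<notin> conn ends (F - {h}))"
proof -
  have finF: "finite F" using FE finE finite_subset by blast
  have ex: "\<exists>P. (P \<subseteq> F \<and> (a,b) \<in> conn ends P) \<and>
      (\<forall>Q. (Q \<subseteq> F \<and> (a,b) \<in> conn ends Q) \<longrightarrow> card P \<le> card Q)"
    by (rule ex_has_least_nat[of _ F]) (use ab in simp)
  then obtain P where P: "P \<subseteq> F \<and> (a,b) \<in> conn ends P"
    and Pmin: "\<forall>Q. Q \<subseteq> F \<and> (a,b) \<in> conn ends Q \<longrightarrow> card P \<le> card Q"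
    by blast
  have finP: "finite P" using P finF finite_subset by blast
  have "\<forall>h\<in>P. (a,b) \<notin> conn ends (F - {h})"
  proof (intro ballI notI)
    fix h assume hP: "h \<in> P" and abF: "(a,b) \<in> conn ends (F - {h})"
    have hE: "h \<in> E" using hP P FE by blast
    have lt: "card (P - {h}) < card P" using finP hP by (rule card_Diff1_less)
    have nP: "(a,b) \<notin> conn ends (P - {h})"
    proof
      assume "(a,b) \<in> conn ends (P - {h})"
      moreover have "P - {h} \<subseteq> F" using P by blast
      ultimately have "card P \<le> card (P - {h})" using Pmin by blast
      then show False using lt by simp
    qed
    have "P = insert h (P - {h})" using hP by blast
    then have "(a,b) \<in> conn ends (insert h (P - {h}))" using P by simp
    then obtain p q where pq: "p \<in> ends h" "q \<in> ends h" "(a,p) \<in> conn ends (P - {h})" "(q,b) \<in> conn ends (P - {h})"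
      using conn_insert[of a b ends h "P - {h}"] nP by blast
    have "p \<noteq> q" using pq nP conn_trans[of a p ends "P - {h}" b] by auto
    then have eh: "ends h = {p,q}" using card2_eq[OF ends_fin[OF hE] ends_le2[OF hE] pq(1,2)] by simp
    have sub: "P - {h} \<subseteq> F - {h}" using P by blast
    have "(p,a) \<in> conn ends (F - {h})" by (rule conn_monoD[OF conn_sym[OF pq(3)] sub])
    moreover have "(b,q) \<in> conn ends (F - {h})" by (rule conn_monoD[OF conn_sym[OF pq(4)] sub])
    ultimately have "(p,q) \<in> conn ends (F - {h})"
      using abF conn_trans[of p a ends "F - {h}" b] conn_trans[of p b ends "F - {h}" q] by blast
    then have "link ends (F - {h}) h" using link_pair[where ends=ends, OF eh] by blast
    moreover have "h \<in> F" using hP P by blast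
    ultimately show False using ind unfolding indep_def by blast
  qed
  then show ?thesis using P by blast
qed

lemma exchange:
  assumes F1: "SF F1" and F2: "SF F2" and g: "g \<in> F1" "g \<notin> F2"
  shows "\<exists>h. h \<in> F2 \<and> h \<notin> F1 \<and> \<not> link ends (F1 - {g}) h \<and> \<not> link ends (F2 - {h}) g"
proof -
  have gE: "g \<in> E" using g F1 SF_sub by blast
  obtain a b where ab: "a \<in> ends g" "b \<in> ends g" "(a,b) \<notin> conn ends (F1 - {g})"
    using SF_indep[OF F1] g unfolding indep_def link_def by blast
  have "(a,b) \<in> conn ends F2" using SF_spans[OF F2] gE ab unfolding spans_def link_def by blast
  then obtain P where P: "P \<subseteq> F2" "(a,b) \<in> conn ends P" "\<forall>h\<in>P. (a,b) \<notin> conn ends (F2 - {h})"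
    using path_lemma[OF SF_sub[OF F2] SF_indep[OF F2]] by blast
  have "\<exists>h\<in>P. \<not> link ends (F1 - {g}) h"
  proof (rule ccontr)
    assume "\<not> (\<exists>h\<in>P. \<not> link ends (F1 - {g}) h)"
    then have "\<And>h. h \<in> P \<Longrightarrow> link ends (F1 - {g}) h" by simp
    then have "conn ends P \<subseteq> conn ends (F1 - {g})" by (rule conn_subset_link)
    then have "(a,b) \<in> conn ends (F1 - {g})" using P(2) by (rule subsetD)
    then show False using ab(3) by simp
  qed
  then obtain h where h: "h \<in> P" "\<not> link ends (F1 - {g}) h" by blast
  have "h \<notin> F1"
  proof
    assume "h \<in> F1"
    moreover have "h \<noteq> g" using h P g by blast
    ultimately have "link ends (F1 - {g}) h" using link_edge[of h "F1 - {g}" ends] by blast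
    then show False using h by simp
  qed
  moreover have "\<not> link ends (F2 - {h}) g" using P(3) h(1) ab unfolding link_def by blast
  ultimately show ?thesis using h P by blast
qed

end


locale gro = gr V E ends for V :: "'v set" and E :: "'e set" and ends :: "'e \<Rightarrow> 'v set" +
  fixes lt :: "'e rel"
  assumes slo: "strict_linear_order_on E lt" and ltE: "lt \<subseteq> E \<times> E"
begin

lemma lt_irrefl: "(e,e) \<notin> lt"
  using slo unfolding strict_linear_order_on_def irrefl_def by blast

lemma lt_trans: "(a,b) \<in> lt \<Longrightarrow> (b,c) \<in> lt \<Longrightarrow> (a,c) \<in> lt"
  using slo unfolding strict_linear_order_on_def trans_def by blast

lemma lt_total: "a \<in> E \<Longrightarrow> b \<in> E \<Longrightarrow> a \<noteq> b \<Longrightarrow> (a,b) \<in> lt \<or> (b,a) \<in> lt"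
  using slo unfolding strict_linear_order_on_def total_on_def by blast

lemma lt_asym: "(a,b) \<in> lt \<Longrightarrow> (b,a) \<notin> lt"
  using lt_trans lt_irrefl by blast

abbreviation IA where "IA F \<equiv> int_active V E ends lt F"
abbreviation EA where "EA F \<equiv> ext_active V E ends lt F"

lemma IA_sub: "IA F \<subseteq> F" unfolding int_active_def by blast
lemma EA_sub: "EA F \<subseteq> E - F" unfolding ext_active_def by blast

lemma bridge:
  assumes F: "SF F" and f: "f \<in> EA F"
  shows "link ends (F - IA F) f"
  unfolding link_def
proof (intro ballI)
  fix u v assume uv: "u \<in> ends f" "v \<in> ends f"
  have fE: "f \<in> E" and fF: "f \<notin> F" using f EA_sub by auto
  have "(u,v) \<in> conn ends F" using SF_spans[OF F] fE uv unfolding spans_def link_def by blast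
  then obtain P where P: "P \<subseteq> F" "(u,v) \<in> conn ends P" "\<forall>h\<in>P. (u,v) \<notin> conn ends (F - {h})"
    using path_lemma[OF SF_sub[OF F] SF_indep[OF F]] by blast
  have "P \<subseteq> F - IA F"
  proof
    fix h assume hP: "h \<in> P"
    have hF: "h \<in> F" using hP P by blast
    have hE: "h \<in> E" using hF SF_sub[OF F] by blast
    show "h \<in> F - IA F"
    proof (rule ccontr)
      assume "h \<notin> F - IA F"
      then have hI: "h \<in> IA F" using hF by blast
      have "\<not> link ends (F - {h}) f" using P(3) hP uv unfolding link_def by blast
      then have sw: "SF (swap_edge F h f)" using swap_SF[OF F hF fE fF] by blast
      have "(h,f) \<notin> lt" using hI sw fE fF unfolding int_active_def by blast
      moreover have "(f,h) \<notin> lt" using f sw hF unfolding ext_active_def by blast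
      moreover have "h \<noteq> f" using hF fF by blast
      ultimately show False using lt_total[OF hE fE] by blast
    qed
  qed
  then show "(u,v) \<in> conn ends (F - IA F)" using P(2) conn_mono[of P "F - IA F" ends] by blast
qed

lemma conn_union:
  assumes F: "SF F" and Ai: "Ai \<subseteq> IA F" and Ae: "Ae \<subseteq> EA F"
  shows "conn ends ((F - Ai) \<union> Ae) = conn ends (F - Ai)"
proof
  show "conn ends (F - Ai) \<subseteq> conn ends ((F - Ai) \<union> Ae)" by (rule conn_mono) blast
  have "\<And>g. g \<in> (F - Ai) \<union> Ae \<Longrightarrow> link ends (F - Ai) g"
  proof -
    fix g assume "g \<in> (F - Ai) \<union> Ae"
    then show "link ends (F - Ai) g"
    proof
      assume "g \<in> F - Ai" then show ?thesis by (rule link_edge)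
    next
      assume "g \<in> Ae"
      then have "link ends (F - IA F) g" using bridge[OF F] Ae by blast
      moreover have "F - IA F \<subseteq> F - Ai" using Ai by blast
      ultimately show ?thesis by (rule link_mono)
    qed
  qed
  then show "conn ends ((F - Ai) \<union> Ae) \<subseteq> conn ends (F - Ai)" by (rule conn_subset_link)
qed

lemma max_exists:
  assumes "finite D" "D \<noteq> {}" "D \<subseteq> E"
  shows "\<exists>g\<in>D. \<forall>h\<in>D. h \<noteq> g \<longrightarrow> (h,g) \<in> lt"
  using assms
proof (induction D rule: finite_ne_induct)
  case (singleton x) then show ?case by simp
next
  case (insert x D)
  then obtain g where g: "g \<in> D" "\<forall>h\<in>D. h \<noteq> g \<longrightarrow> (h,g) \<in> lt" by blast
  have xE: "x \<in> E" and gE: "g \<in> E" using insert g by auto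
  show ?case
  proof (cases "(g,x) \<in> lt")
    case True
    have "\<forall>h\<in>insert x D. h \<noteq> x \<longrightarrow> (h,x) \<in> lt"
    proof (intro ballI impI)
      fix h assume "h \<in> insert x D" "h \<noteq> x"
      then have hD: "h \<in> D" by simp
      show "(h,x) \<in> lt"
      proof (cases "h = g")
        case True then show ?thesis using \<open>(g,x) \<in> lt\<close> by simp
      next
        case False then show ?thesis using g(2) hD lt_trans[of h g x] \<open>(g,x) \<in> lt\<close> by blast
      qed
    qed
    then show ?thesis by blast
  next
    case False
    have "x \<noteq> g" using insert g by blast
    then have "(x,g) \<in> lt" using lt_total[OF xE gE] False by blast
    then show ?thesis using g by blast
  qed
qed

lemma no_max:
  assumes F1: "SF F1" and F2: "SF F2"
    and A1: "F1 - A \<subseteq> IA F1" "A - F1 \<subseteq> EA F1"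
    and A2: "F2 - A \<subseteq> IA F2" "A - F2 \<subseteq> EA F2"
    and g: "g \<in> F1" "g \<notin> F2"
    and gmax: "\<forall>h\<in>(F1 - F2) \<union> (F2 - F1). h \<noteq> g \<longrightarrow> (h,g) \<in> lt"
  shows False
proof -
  obtain h where h: "h \<in> F2" "h \<notin> F1" "\<not> link ends (F1 - {g}) h" "\<not> link ends (F2 - {h}) g"
    using exchange[OF F1 F2 g] by blast
  have gE: "g \<in> E" using g SF_sub[OF F1] by blast
  have hE: "h \<in> E" using h SF_sub[OF F2] by blast
  have sw1: "SF (swap_edge F1 g h)" using swap_SF[OF F1 g(1) hE h(2) h(3)] .
  have sw2: "SF (swap_edge F2 h g)" using swap_SF[OF F2 h(1) gE g(2) h(4)] .
  have hD: "h \<in> (F1 - F2) \<union> (F2 - F1)" using h by blast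
  have "h \<noteq> g" using h g by blast
  then have hg: "(h,g) \<in> lt" using gmax hD by blast
  show False
  proof (cases "h \<in> A")
    case True
    then have "h \<in> EA F1" using A1(2) h by blast
    then show False using sw1 hg g(1) unfolding ext_active_def by blast
  next
    case False
    then have "h \<in> IA F2" using A2(1) h by blast
    then show False using sw2 hg g gE unfolding int_active_def by blast
  qed
qed

lemma unique:
  assumes F1: "SF F1" and F2: "SF F2"
    and A1: "F1 - A \<subseteq> IA F1" "A - F1 \<subseteq> EA F1"
    and A2: "F2 - A \<subseteq> IA F2" "A - F2 \<subseteq> EA F2"
  shows "F1 = F2"
proof (rule ccontr)
  assume ne: "F1 \<noteq> F2"
  define D where "D = (F1 - F2) \<union> (F2 - F1)"
  have "D \<noteq> {}" using ne unfolding D_def by blast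
  moreover have "finite D" using SF_fin[OF F1] SF_fin[OF F2] unfolding D_def by blast
  moreover have "D \<subseteq> E" using SF_sub[OF F1] SF_sub[OF F2] unfolding D_def by blast
  ultimately obtain g where g: "g \<in> D" "\<forall>h\<in>D. h \<noteq> g \<longrightarrow> (h,g) \<in> lt"
    using max_exists by blast
  show False
  proof (cases "g \<in> F1")
    case True
    then have "g \<notin> F2" using g unfolding D_def by blast
    then show False using no_max[OF F1 F2 A1 A2 True] g unfolding D_def by blast
  next
    case False
    then have "g \<in> F2" using g unfolding D_def by blast
    moreover have "\<forall>h\<in>(F2 - F1) \<union> (F1 - F2). h \<noteq> g \<longrightarrow> (h,g) \<in> lt" using g unfolding D_def by blast
    ultimately show False using no_max[OF F2 F1 A2 A1 _ False] by blast
  qed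
qed

end


context gro
begin

lemma SF_exists: "\<exists>F. SF F"
proof -
  have sE: "spans E" unfolding spans_def using link_edge[of _ E ends] by blast
  have ex: "\<exists>P. (P \<subseteq> E \<and> spans P) \<and> (\<forall>Q. (Q \<subseteq> E \<and> spans Q) \<longrightarrow> card P \<le> card Q)"
    by (rule ex_has_least_nat[of _ E]) (use sE in simp)
  then obtain P where P: "P \<subseteq> E" "spans P" and Pmin: "\<forall>Q. (Q \<subseteq> E \<and> spans Q) \<longrightarrow> card P \<le> card Q"
    by blast
  have finP: "finite P" using P finE finite_subset by blast
  have "indep P" unfolding indep_def
  proof (intro ballI notI)
    fix e assume eP: "e \<in> P" and le: "link ends (P - {e}) e"
    have "\<And>g. g \<in> P \<Longrightarrow> link ends (P - {e}) g"
    proof -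
      fix g assume "g \<in> P"
      show "link ends (P - {e}) g"
      proof (cases "g = e")
        case True then show ?thesis using le by simp
      next
        case False then show ?thesis using \<open>g \<in> P\<close> link_edge[of g "P - {e}" ends] by blast
      qed
    qed
    then have cs: "conn ends P \<subseteq> conn ends (P - {e})" by (rule conn_subset_link)
    have "spans (P - {e})" unfolding spans_def
    proof
      fix h assume "h \<in> E"
      then have "link ends P h" using P(2) unfolding spans_def by blast
      then show "link ends (P - {e}) h" using link_conn[OF _ cs] by blast
    qed
    moreover have "P - {e} \<subseteq> E" using P by blast
    ultimately have "card P \<le> card (P - {e})" using Pmin by blast
    moreover have "card (P - {e}) < card P" using finP eP by (rule card_Diff1_less)
    ultimately show False by simp
  qed
  then show ?thesis using P SF_iff by blast
qed

definition rk :: "'e \<Rightarrow> nat" where "rk e = card {e' \<in> E. (e',e) \<in> lt}"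

lemma rk_mono: assumes "(e,f) \<in> lt" shows "rk e < rk f"
proof -
  have "{e' \<in> E. (e',e) \<in> lt} \<subset> {e' \<in> E. (e',f) \<in> lt}"
  proof
    show "{e' \<in> E. (e',e) \<in> lt} \<subseteq> {e' \<in> E. (e',f) \<in> lt}" using assms lt_trans by blast
    have "e \<in> E" using assms ltE by blast
    then have "e \<in> {e' \<in> E. (e',f) \<in> lt}" using assms by simp
    moreover have "e \<notin> {e' \<in> E. (e',e) \<in> lt}" using lt_irrefl by simp
    ultimately show "{e' \<in> E. (e',e) \<in> lt} \<noteq> {e' \<in> E. (e',f) \<in> lt}" by blast
  qed
  then show ?thesis unfolding rk_def by (rule psubset_card_mono[rotated]) (use finE in simp)
qed

lemma rk_bd: assumes "e \<in> E" shows "rk e < card E"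
proof -
  have "{e' \<in> E. (e',e) \<in> lt} \<subset> E" using assms lt_irrefl by blast
  then show ?thesis unfolding rk_def using finE by (simp add: psubset_card_mono)
qed

lemma exists_interval:
  assumes AE: "A \<subseteq> E"
  shows "\<exists>F. SF F \<and> F - A \<subseteq> IA F \<and> A - F \<subseteq> EA F"
proof -
  define n where "n = card E"
  define w where "w e = (if e \<in> A then 2 ^ Suc n - 2 ^ rk e else (2::int) ^ rk e)" for e
  define \<Phi> where "\<Phi> F = (\<Sum>e\<in>F. w e)" for F
  have pw: "(2::int) ^ rk e < 2 ^ n" if "e \<in> E" for e
    using rk_bd[OF that] unfolding n_def by (simp add: power_strict_increasing)
  have w_lt: "w e < w f" if ef: "e \<in> E" "f \<in> E" and
    c: "(e \<notin> A \<and> f \<in> A) \<or> (e \<notin> A \<and> f \<notin> A \<and> (e,f) \<in> lt) \<or> (e \<in> A \<and> f \<in> A \<and> (f,e) \<in> lt)" for e f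
  proof -
    have p2: "(2::int) ^ Suc n = 2 * 2 ^ n" by simp
    from c consider "e \<notin> A \<and> f \<in> A" | "e \<notin> A \<and> f \<notin> A \<and> (e,f) \<in> lt" | "e \<in> A \<and> f \<in> A \<and> (f,e) \<in> lt"
      by blast
    then show ?thesis
    proof cases
      case 1
      then have a: "w e = 2 ^ rk e" "w f = 2 ^ Suc n - 2 ^ rk f" unfolding w_def by simp_all
      show ?thesis using a pw[OF ef(1)] pw[OF ef(2)] p2 by linarith
    next
      case 2
      then have "rk e < rk f" using rk_mono by blast
      then have "(2::int) ^ rk e < 2 ^ rk f" by (simp add: power_strict_increasing)
      then show ?thesis using 2 unfolding w_def by simp
    next
      case 3
      then have "rk f < rk e" using rk_mono by blast
      then have "(2::int) ^ rk f < 2 ^ rk e" by (simp add: power_strict_increasing)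
      then show ?thesis using 3 unfolding w_def by simp
    qed
  qed
  have Phi_sw: "\<Phi> (swap_edge F e f) = \<Phi> F - w e + w f" if "finite F" "e \<in> F" "f \<notin> F" for F e f
  proof -
    have "\<Phi> (swap_edge F e f) = w f + (\<Sum>e\<in>F - {e}. w e)"
      unfolding \<Phi>_def swap_edge_def using that by (simp add: sum.insert)
    also have "(\<Sum>e\<in>F - {e}. w e) = \<Phi> F - w e" unfolding \<Phi>_def using that by (simp add: sum_diff1)
    finally show ?thesis by simp
  qed
  define S where "S = {F. SF F}"
  have finS: "finite S" unfolding S_def using SF_sub finE
    by (metis (no_types, lifting) Pow_iff finite_Pow_iff mem_Collect_eq rev_finite_subset subsetI)
  have neS: "S \<noteq> {}" unfolding S_def using SF_exists by blast
  define M where "M = Max (\<Phi> ` S)"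
  have "M \<in> \<Phi> ` S" unfolding M_def using finS neS by simp
  then obtain F0 where F0S: "F0 \<in> S" and F0M: "\<Phi> F0 = M" by blast
  have maxF: "\<Phi> F \<le> \<Phi> F0" if "SF F" for F
    unfolding F0M M_def using finS that unfolding S_def by simp
  have F0: "SF F0" using F0S unfolding S_def by simp
  have finF0: "finite F0" using SF_fin[OF F0] .
  have F0E: "F0 \<subseteq> E" using SF_sub[OF F0] .
  have "F0 - A \<subseteq> IA F0"
  proof
    fix e assume e: "e \<in> F0 - A"
    show "e \<in> IA F0" unfolding int_active_def
    proof (clarsimp simp: e[simplified])
      fix f assume f: "f \<in> E" "f \<notin> F0" "(e,f) \<in> lt" "SF (swap_edge F0 e f)"
      have eE: "e \<in> E" using e F0E by blast
      have "w e < w f" using w_lt[OF eE f(1)] e f(3) by blast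
      then have "\<Phi> F0 < \<Phi> (swap_edge F0 e f)" using Phi_sw[OF finF0 _ f(2)] e by simp
      then show False using maxF[OF f(4)] by simp
    qed
  qed
  moreover have "A - F0 \<subseteq> EA F0"
  proof
    fix f assume f: "f \<in> A - F0"
    have fE: "f \<in> E" using f AE by blast
    show "f \<in> EA F0" unfolding ext_active_def
    proof (clarsimp simp: f[simplified] fE)
      fix e assume e: "e \<in> F0" "(f,e) \<in> lt" "SF (swap_edge F0 e f)"
      have eE: "e \<in> E" using e F0E by blast
      have "w e < w f" using w_lt[OF eE fE] e f by blast
      then have "\<Phi> F0 < \<Phi> (swap_edge F0 e f)" using Phi_sw[OF finF0 e(1)] f by simp
      then show False using maxF[OF e(3)] by simp
    qed
  qed
  ultimately show ?thesis using F0 by blast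
qed

end

lemma pow_sum: "finite S \<Longrightarrow> (1 + (y::'a::comm_ring_1)) ^ card S = (\<Sum>T\<in>Pow S. y ^ card T)"
proof -
  assume fin: "finite S"
  have "(1 + y) ^ card S = (\<Prod>x\<in>S. y + 1)" by (simp add: add.commute)
  also have "\<dots> = (\<Sum>T\<in>Pow S. (\<Prod>x\<in>T. y) * (\<Prod>x\<in>S - T. 1))" by (rule prod_add[OF fin])
  also have "\<dots> = (\<Sum>T\<in>Pow S. y ^ card T)" by simp
  finally show ?thesis .
qed



theorem theorem3p5:
  fixes V :: "'v set" and E :: "'e set" and ends :: "'e \<Rightarrow> 'v set"
    and lt :: "'e rel" and x :: "nat \<Rightarrow> 'a::comm_ring_1" and y :: 'a
  assumes "is_graph V E ends"
    and "strict_linear_order_on E lt" and "lt \<subseteq> E \<times> E"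
  shows "U' V E ends x y =
    (\<Sum>Af\<in>{A. spanning_forest V E ends A}.
       \<Sum>Ai\<in>Pow (int_active V E ends lt Af).
         (\<Prod>j=1..card V. x j ^ ncomp_size V ends (Af - Ai) j) * y ^ card (Af - Ai)
           * (1 + y) ^ n_ext_active V E ends lt Af)"
proof -
  interpret gro V E ends lt using assms by unfold_locales auto
  define g where "g A = (\<Prod>j=1..card V. x j ^ ncomp_size V ends A j) * y ^ card A" for A
  define S where "S = {A. spanning_forest V E ends A}"
  define T where "T = (SIGMA F:S. Pow (IA F) \<times> Pow (EA F))"
  define h where "h = (\<lambda>(F::'e set, Ai::'e set, Ae::'e set). (F - Ai) \<union> Ae)"
  have finS: "finite S" unfolding S_def using SF_sub finE
    by (metis (no_types, lifting) Pow_iff finite_Pow_iff mem_Collect_eq rev_finite_subset subsetI)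
  have finIA: "finite (IA F)" if "F \<in> S" for F
    using that SF_fin IA_sub finite_subset unfolding S_def by blast
  have finEA: "finite (EA F)" for F
    using EA_sub finE finite_subset by (metis Diff_subset subset_trans)
  have step: "(\<Prod>j=1..card V. x j ^ ncomp_size V ends (F - Ai) j) * y ^ card (F - Ai)
           * (1 + y) ^ n_ext_active V E ends lt F = (\<Sum>Ae\<in>Pow (EA F). g ((F - Ai) \<union> Ae))"
    if F: "F \<in> S" and Ai: "Ai \<in> Pow (IA F)" for F Ai
  proof -
    have SFF: "SF F" using F unfolding S_def by simp
    have "(1 + y) ^ n_ext_active V E ends lt F = (\<Sum>Ae\<in>Pow (EA F). y ^ card Ae)"
      unfolding n_ext_active_def by (rule pow_sum[OF finEA])
    then have "(\<Prod>j=1..card V. x j ^ ncomp_size V ends (F - Ai) j) * y ^ card (F - Ai)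
           * (1 + y) ^ n_ext_active V E ends lt F
       = (\<Sum>Ae\<in>Pow (EA F). (\<Prod>j=1..card V. x j ^ ncomp_size V ends (F - Ai) j) * y ^ card (F - Ai) * y ^ card Ae)"
      by (simp add: sum_distrib_left)
    also have "\<dots> = (\<Sum>Ae\<in>Pow (EA F). g ((F - Ai) \<union> Ae))"
    proof (rule sum.cong[OF refl])
      fix Ae assume Ae: "Ae \<in> Pow (EA F)"
      have cu: "conn ends ((F - Ai) \<union> Ae) = conn ends (F - Ai)"
        using conn_union[OF SFF] Ai Ae by blast
      have nc: "ncomp_size V ends ((F - Ai) \<union> Ae) j = ncomp_size V ends (F - Ai) j" for j
        unfolding ncomp_size_def comps_def cu ..
      have "Ae \<subseteq> E - F" using Ae EA_sub by blast
      moreover have "finite Ae" using Ae finEA finite_subset by blast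
      moreover have "finite (F - Ai)" using SF_fin[OF SFF] by blast
      ultimately have "card ((F - Ai) \<union> Ae) = card (F - Ai) + card Ae"
        by (intro card_Un_disjoint) auto
      then show "(\<Prod>j=1..card V. x j ^ ncomp_size V ends (F - Ai) j) * y ^ card (F - Ai) * y ^ card Ae
          = g ((F - Ai) \<union> Ae)"
        unfolding g_def nc by (simp add: power_add mult.assoc)
    qed
    finally show ?thesis .
  qed
  have "(\<Sum>Af\<in>S. \<Sum>Ai\<in>Pow (IA Af).
         (\<Prod>j=1..card V. x j ^ ncomp_size V ends (Af - Ai) j) * y ^ card (Af - Ai)
           * (1 + y) ^ n_ext_active V E ends lt Af)
      = (\<Sum>F\<in>S. \<Sum>Ai\<in>Pow (IA F). \<Sum>Ae\<in>Pow (EA F). g ((F - Ai) \<union> Ae))"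
    using step by (intro sum.cong refl) auto
  also have "\<dots> = (\<Sum>F\<in>S. \<Sum>p\<in>Pow (IA F) \<times> Pow (EA F). g ((F - fst p) \<union> snd p))"
    by (intro sum.cong refl) (simp add: sum.cartesian_product case_prod_beta)
  also have "\<dots> = (\<Sum>q\<in>T. g ((fst q - fst (snd q)) \<union> snd (snd q)))"
    unfolding T_def
    by (subst sum.Sigma) (use finS finIA finEA in \<open>auto simp: case_prod_beta\<close>)
  also have "\<dots> = (\<Sum>q\<in>T. g (h q))"
    unfolding h_def by (intro sum.cong refl) (simp add: case_prod_beta)
  also have "\<dots> = (\<Sum>A\<in>Pow E. g A)"
  proof (rule sum.reindex_bij_betw)
    show "bij_betw h T (Pow E)"
      unfolding bij_betw_def
    proof (intro conjI)
      show "inj_on h T"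
      proof (rule inj_onI)
        fix p q assume p: "p \<in> T" and q: "q \<in> T" and eq: "h p = h q"
        obtain F1 Ai1 Ae1 where p': "p = (F1, Ai1, Ae1)" by (cases p) auto
        obtain F2 Ai2 Ae2 where q': "q = (F2, Ai2, Ae2)" by (cases q) auto
        define A where "A = (F1 - Ai1) \<union> Ae1"
        have A2: "A = (F2 - Ai2) \<union> Ae2" using eq unfolding A_def h_def p' q' by simp
        have c1: "SF F1" "Ai1 \<subseteq> IA F1" "Ae1 \<subseteq> EA F1" using p unfolding p' T_def S_def by auto
        have c2: "SF F2" "Ai2 \<subseteq> IA F2" "Ae2 \<subseteq> EA F2" using q unfolding q' T_def S_def by auto
        have d1: "Ai1 \<subseteq> F1" "Ae1 \<inter> F1 = {}" using c1 IA_sub[of F1] EA_sub[of F1] by auto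
        have d2: "Ai2 \<subseteq> F2" "Ae2 \<inter> F2 = {}" using c2 IA_sub[of F2] EA_sub[of F2] by auto
        have e1: "F1 - A = Ai1" "A - F1 = Ae1" unfolding A_def using d1 by auto
        have e2: "F2 - A = Ai2" "A - F2 = Ae2" unfolding A2 using d2 by auto
        have "F1 = F2" by (rule unique[OF c1(1) c2(1), of A]) (use e1 e2 c1 c2 in simp_all)
        then show "p = q" unfolding p' q' using e1 e2 by simp
      qed
      show "h ` T = Pow E"
      proof
        show "h ` T \<subseteq> Pow E"
        proof
          fix A assume "A \<in> h ` T"
          then obtain F Ai Ae where t: "(F, Ai, Ae) \<in> T" and A: "A = (F - Ai) \<union> Ae"
            unfolding h_def by auto
          have "SF F" "Ae \<subseteq> EA F" using t unfolding T_def S_def by auto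
          then show "A \<in> Pow E" unfolding A using SF_sub EA_sub by blast
        qed
        show "Pow E \<subseteq> h ` T"
        proof
          fix A assume "A \<in> Pow E"
          then obtain F where F: "SF F" "F - A \<subseteq> IA F" "A - F \<subseteq> EA F"
            using exists_interval by blast
          have "(F, F - A, A - F) \<in> T" unfolding T_def S_def using F by auto
          moreover have "h (F, F - A, A - F) = A" unfolding h_def by auto
          ultimately show "A \<in> h ` T" by (metis image_eqI)
        qed
      qed
    qed
  qed
  finally show ?thesis unfolding U'_def g_def S_def by simp
qed


end
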